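(* Let $G=(\mathbb Z/a_1\mathbb Z)\times\dots\times(\mathbb Z/a_r\mathbb Z)$ be a finite Abelian group and let $f,g:G\to\mathbb C$. Suppose that $\widehat f$ is nowhere zero or $\widehat g$ is nowhere zero, and that $M_n(f;x_1,\dots,x_{n-1})=M_n(g;x_1,\dots,x_{n-1})$ for all $n\in\{1,2,3\}$ and all $x_1,\dots,x_{n-1}\in G$. Then there exists $y\in G$ with $g(x)=f(x+y)$ for all $x\in G$.
   Context: Elements of $G$ are tuples $x=(x[1],\dots,x[r])$ with componentwise addition modulo $a_k$. Define $\chi(x,y)=\exp\left(2\pi i\sum_{k=1}^r \frac{x[k]y[k]}{a_k}\right)$. The discrete Fourier transform of $f$ is $\widehat f(x)=\sum_{y\in G}f(y)\overline{\chi(x,y)}$. The $n$-th autocorrelation is $M_n(f;x_1,\dots,x_{n-1})=\sum_{y\in G}f(y)f(y+x_1)\cdots f(y+x_{n-1})$. *)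

theory Defs
  imports Complex_Main
begin

text \<open>The group G = Z/a_0 x ... x Z/a_(r-1) (indices shifted to 0..r-1).
  Elements are functions nat => nat with x k < a k for k < r and x k = 0 for k >= r.\<close>

definition grp :: "nat \<Rightarrow> (nat \<Rightarrow> nat) \<Rightarrow> (nat \<Rightarrow> nat) set" where
  "grp r a = {x. (\<forall>k<r. x k < a k) \<and> (\<forall>k\<ge>r. x k = 0)}"

definition gadd :: "nat \<Rightarrow> (nat \<Rightarrow> nat) \<Rightarrow> (nat \<Rightarrow> nat) \<Rightarrow> (nat \<Rightarrow> nat) \<Rightarrow> (nat \<Rightarrow> nat)" where
  "gadd r a x y = (\<lambda>k. if k < r then (x k + y k) mod a k else 0)"

definition chr :: "nat \<Rightarrow> (nat \<Rightarrow> nat) \<Rightarrow> (nat \<Rightarrow> nat) \<Rightarrow> (nat \<Rightarrow> nat) \<Rightarrow> complex" where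
  "chr r a x y = exp (2 * of_real pi * \<i> * of_real (\<Sum>k<r. real (x k * y k) / real (a k)))"

definition dft :: "nat \<Rightarrow> (nat \<Rightarrow> nat) \<Rightarrow> ((nat \<Rightarrow> nat) \<Rightarrow> complex) \<Rightarrow> (nat \<Rightarrow> nat) \<Rightarrow> complex" where
  "dft r a f x = (\<Sum>y\<in>grp r a. f y * cnj (chr r a x y))"

text \<open>n-th autocorrelation; the list xs = [x_1,...,x_(n-1)] has length n-1.\<close>
definition autocorr :: "nat \<Rightarrow> (nat \<Rightarrow> nat) \<Rightarrow> ((nat \<Rightarrow> nat) \<Rightarrow> complex) \<Rightarrow> (nat \<Rightarrow> nat) list \<Rightarrow> complex" where
  "autocorr r a f xs = (\<Sum>y\<in>grp r a. f y * prod_list (map (\<lambda>x. f (gadd r a y x)) xs))"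

end

theory Submission
  imports Defs "HOL-Analysis.Analysis"
begin


definition zer :: "nat \<Rightarrow> nat" where "zer = (\<lambda>_. 0)"
definition gneg :: "nat \<Rightarrow> (nat \<Rightarrow> nat) \<Rightarrow> (nat \<Rightarrow> nat) \<Rightarrow> (nat \<Rightarrow> nat)" where
  "gneg r a x = (\<lambda>k. if k < r then (a k - x k) mod a k else 0)"
definition single :: "nat \<Rightarrow> nat \<Rightarrow> (nat \<Rightarrow> nat)" where
  "single m c = (\<lambda>k. if k = m then c else 0)"
definition trunc :: "nat \<Rightarrow> (nat \<Rightarrow> nat) \<Rightarrow> (nat \<Rightarrow> nat)" where
  "trunc m x = (\<lambda>k. if k < m then x k else 0)"

locale gctx =
  fixes r :: nat and a :: "nat \<Rightarrow> nat"
  assumes apos: "\<forall>k<r. a k > 0"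
begin

abbreviation "G \<equiv> grp r a"
abbreviation "add \<equiv> gadd r a"
abbreviation "neg \<equiv> gneg r a"

lemma finG: "finite G"
proof -
  have "G = (\<lambda>f k. if k < r then f k else 0) ` (PiE {..<r} (\<lambda>k. {..<a k}))"
  proof (rule set_eqI, rule iffI)
    fix x assume x: "x \<in> G"
    then have "x = (\<lambda>k. if k < r then restrict x {..<r} k else 0)"
      by (auto simp: grp_def)
    moreover have "restrict x {..<r} \<in> PiE {..<r} (\<lambda>k. {..<a k})" using x by (auto simp: grp_def)
    ultimately show "x \<in> (\<lambda>f k. if k < r then f k else 0) ` (PiE {..<r} (\<lambda>k. {..<a k}))" by blast
  qed (auto simp: grp_def PiE_def Pi_def)
  then show ?thesis by (simp add: finite_PiE)
qed

lemma zer_in: "zer \<in> G" using apos by (auto simp: grp_def zer_def)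
lemma add_in: "add x y \<in> G" using apos by (auto simp: grp_def gadd_def)
lemma neg_in: "neg x \<in> G" using apos by (auto simp: grp_def gneg_def)
lemma add_comm: "add x y = add y x" by (auto simp: gadd_def add.commute)
lemma add_assoc: "add (add x y) z = add x (add y z)"
  by (auto simp: gadd_def mod_add_left_eq mod_add_right_eq add.assoc)
lemma add_zer: "x \<in> G \<Longrightarrow> add x zer = x" by (auto simp: gadd_def zer_def grp_def)
lemma add_neg: "x \<in> G \<Longrightarrow> add x (neg x) = zer"
proof (rule ext)
  fix k assume x: "x \<in> G"
  show "add x (neg x) k = zer k"
  proof (cases "k < r")
    case True
    then have "x k < a k" "a k > 0" using x apos by (auto simp: grp_def)
    then have "(x k + (a k - x k) mod a k) mod a k = 0"
      by (metis add_diff_inverse_nat mod_add_right_eq mod_self not_less_iff_gr_or_eq order.asym)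
    then show ?thesis using True by (simp add: gadd_def gneg_def zer_def)
  qed (simp add: gadd_def zer_def)
qed

lemma add_neg_cancel: "x \<in> G \<Longrightarrow> y \<in> G \<Longrightarrow> add (add x (neg y)) y = x"
  by (metis add_assoc add_comm add_neg add_zer)

lemma sum_shift: assumes t: "t \<in> G" shows "(\<Sum>x\<in>G. \<phi> (add x t)) = (\<Sum>x\<in>G. \<phi> x)"
  by (rule sum.reindex_bij_witness[of _ "\<lambda>x. add x (neg t)" "\<lambda>x. add x t"])
     (use t in \<open>auto simp: add_in add_neg_cancel\<close>, metis add_assoc add_comm add_neg add_zer neg_in)

end


context gctx begin

definition S :: "(nat \<Rightarrow> nat) \<Rightarrow> (nat \<Rightarrow> nat) \<Rightarrow> real" where
  "S x y = (\<Sum>k<r. real (x k * y k) / real (a k))"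

lemma chr_S: "chr r a x y = exp (2 * of_real pi * \<i> * of_real (S x y))"
  by (simp add: chr_def S_def)

lemma exp_int: "exp (2 * of_real pi * \<i> * of_nat N) = (1::complex)"
proof -
  have "exp (2 * of_real pi * \<i> * of_nat N) = exp (of_nat N * (2 * of_real pi * \<i>))"
    by (simp add: mult.commute)
  also have "\<dots> = 1" by (simp only: exp_of_nat_mult exp_two_pi_i power_one)
  finally show ?thesis .
qed

lemma S_add: "S x (add y z) = S x y + S x z - real (\<Sum>k<r. x k * ((y k + z k) div a k))"
proof -
  have "real (x k * add y z k) / real (a k) =
        real (x k * y k) / real (a k) + real (x k * z k) / real (a k) - real (x k * ((y k + z k) div a k))"
    if k: "k < r" for k
  proof -
    have ak: "a k > 0" using apos k by auto
    have e: "y k + z k = a k * ((y k + z k) div a k) + (y k + z k) mod a k" by simp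
    have "real (y k + z k) = real (a k) * real ((y k + z k) div a k) + real ((y k + z k) mod a k)"
      by (metis e of_nat_add of_nat_mult)
    then have "real (x k) * (real (y k) + real (z k)) = real (x k) * (real (a k) * real ((y k + z k) div a k) + real ((y k + z k) mod a k))"
      by simp
    then have "real (x k) * real (y k) + real (x k) * real (z k) = real (x k) * real ((y k + z k) mod a k) + real (a k) * (real (x k) * real ((y k + z k) div a k))"
      by (simp add: algebra_simps)
    then show ?thesis using k ak by (simp add: gadd_def field_simps)
  qed
  then show ?thesis unfolding S_def
    by (simp add: sum.distrib sum_subtractf of_nat_sum)
qed

lemma chr_add2: "chr r a x (add y z) = chr r a x y * chr r a x z"
proof -
  define N where "N = (\<Sum>k<r. x k * ((y k + z k) div a k))"
  have e: "2 * of_real pi * \<i> * of_real (S x y + S x z - real N) =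
     2 * of_real pi * \<i> * of_real (S x y) + 2 * of_real pi * \<i> * of_real (S x z) - 2 * of_real pi * \<i> * of_nat N"
    by (simp add: algebra_simps)
  show ?thesis
    unfolding chr_S S_add N_def[symmetric] e exp_diff exp_add exp_int by simp
qed

lemma chr_sym: "chr r a x y = chr r a y x"
  by (simp add: chr_def mult.commute)

lemma chr_add1: "chr r a (add x y) z = chr r a x z * chr r a y z"
  by (metis chr_sym chr_add2)

lemma chr_zer: "chr r a x zer = 1" by (simp add: chr_def zer_def)
lemma chr_zer1: "chr r a zer x = 1" by (simp add: chr_def zer_def)

lemma chr_norm: "norm (chr r a x y) = 1"
  unfolding chr_def by (simp add: norm_exp)

lemma cnj_chr_mult: "cnj (chr r a x y) * chr r a x y = 1"
  by (metis chr_norm complex_norm_square mult.commute of_real_1 power_one)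

lemma chr_neg: "y \<in> G \<Longrightarrow> chr r a x (neg y) = cnj (chr r a x y)"
proof -
  assume y: "y \<in> G"
  have "chr r a x (neg y) * chr r a x y = 1"
    by (metis chr_add2 add_comm add_neg y chr_zer)
  moreover have "chr r a x y \<noteq> 0" using chr_norm[of x y] by auto
  ultimately show ?thesis using cnj_chr_mult[of x y] by (metis mult_right_cancel)
qed

lemma chr_single: "m < r \<Longrightarrow> chr r a (single m 1) y = exp (2 * of_real pi * \<i> * of_nat (y m) / of_nat (a m))"
proof -
  assume m: "m < r"
  have "S (single m 1) y = (\<Sum>k<r. if k = m then real (y m) / real (a m) else 0)"
    unfolding S_def by (rule sum.cong) (auto simp: single_def)
  also have "\<dots> = real (y m) / real (a m)" using m by simp
  finally show ?thesis unfolding chr_S by simp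
qed

end


context gctx begin

lemma single_in: "m < r \<Longrightarrow> c < a m \<Longrightarrow> single m c \<in> G"
  using apos by (auto simp: grp_def single_def)

lemma orth: assumes x: "x \<in> G"
  shows "(\<Sum>\<xi>\<in>G. chr r a \<xi> x) = (if x = zer then of_nat (card G) else 0)"
proof (cases "x = zer")
  case True then show ?thesis by (simp add: chr_zer)
next
  case False
  then obtain k where k: "x k \<noteq> 0" by (auto simp: zer_def)
  then have kr: "k < r" using x by (cases "k < r") (auto simp: grp_def)
  have xk: "x k < a k" using x kr by (auto simp: grp_def)
  define t where "t = single k 1"
  have t: "t \<in> G" unfolding t_def using kr xk k by (intro single_in) auto
  define c where "c = chr r a t x"
  have "c = exp (2 * of_real pi * \<i> * of_nat (x k) / of_nat (a k))"
    unfolding c_def t_def using chr_single[OF kr] .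
  moreover have "\<not> a k dvd x k" using k xk by (auto dest: dvd_imp_le)
  ultimately have c1: "c \<noteq> 1" using complex_root_unity_eq_1[of "a k" "x k"] xk by auto
  have "(\<Sum>\<xi>\<in>G. chr r a \<xi> x) = (\<Sum>\<xi>\<in>G. chr r a (add \<xi> t) x)"
    using sum_shift[OF t, of "\<lambda>\<xi>. chr r a \<xi> x"] by simp
  also have "\<dots> = (\<Sum>\<xi>\<in>G. chr r a \<xi> x) * c"
    by (simp add: chr_add1 c_def sum_distrib_right)
  finally have "(\<Sum>\<xi>\<in>G. chr r a \<xi> x) * (1 - c) = 0" by (simp add: algebra_simps)
  then show ?thesis using c1 False by simp
qed

lemma sub_zer_iff: "x \<in> G \<Longrightarrow> y \<in> G \<Longrightarrow> (add x (neg y) = zer) = (y = x)"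
  by (metis add_neg add_neg_cancel add_comm add_zer zer_in)

lemma uniq: assumes h: "\<forall>\<xi>\<in>G. dft r a h \<xi> = 0" and x: "x \<in> G"
  shows "h x = 0"
proof -
  have "0 = (\<Sum>\<xi>\<in>G. dft r a h \<xi> * chr r a \<xi> x)" using h by simp
  also have "\<dots> = (\<Sum>\<xi>\<in>G. \<Sum>y\<in>G. h y * chr r a \<xi> (add x (neg y)))"
    unfolding dft_def sum_distrib_right
    by (intro sum.cong refl) (simp add: chr_add2 chr_neg mult.assoc mult.commute mult.left_commute)
  also have "\<dots> = (\<Sum>y\<in>G. h y * (\<Sum>\<xi>\<in>G. chr r a \<xi> (add x (neg y))))"
    by (subst sum.swap) (simp add: sum_distrib_left)
  also have "\<dots> = (\<Sum>y\<in>G. if y = x then h y * of_nat (card G) else 0)"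
    by (intro sum.cong refl) (simp add: orth add_in sub_zer_iff x)
  also have "\<dots> = h x * of_nat (card G)" using x finG by simp
  finally have "h x * of_nat (card G) = 0" by simp
  moreover have "card G \<noteq> 0" using finG zer_in by auto
  ultimately show ?thesis by simp
qed

lemma shift: assumes y: "y \<in> G"
  shows "dft r a (\<lambda>x. f (add x y)) \<xi> = chr r a \<xi> y * dft r a f \<xi>"
proof -
  have "dft r a f \<xi> = (\<Sum>x\<in>G. f (add x y) * cnj (chr r a \<xi> (add x y)))"
    unfolding dft_def using sum_shift[OF y, of "\<lambda>z. f z * cnj (chr r a \<xi> z)"] by simp
  also have "\<dots> = cnj (chr r a \<xi> y) * dft r a (\<lambda>x. f (add x y)) \<xi>"
    unfolding dft_def sum_distrib_left by (intro sum.cong refl) (simp add: chr_add2)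
  finally have e: "dft r a f \<xi> = cnj (chr r a \<xi> y) * dft r a (\<lambda>x. f (add x y)) \<xi>" .
  have "chr r a \<xi> y * cnj (chr r a \<xi> y) = 1" using cnj_chr_mult by (simp add: mult.commute)
  then show ?thesis unfolding e by (metis mult.assoc mult_1)
qed

end


context gctx begin

lemma single_zero: "single m 0 = zer" by (auto simp: single_def zer_def)

lemma single_Suc: "m < r \<Longrightarrow> Suc c < a m \<Longrightarrow> single m (Suc c) = add (single m c) (single m 1)"
  by (rule ext) (auto simp: single_def gadd_def)

lemma single_pow:
  assumes hom: "\<forall>x\<in>G. \<forall>y\<in>G. u (add x y) = u x * u y" and u0: "u zer = (1::complex)"
    and m: "m < r"
  shows "c < a m \<Longrightarrow> u (single m c) = u (single m 1) ^ c"
proof (induction c)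
  case 0 then show ?case by (simp add: single_zero u0)
next
  case (Suc c)
  then have "u (single m (Suc c)) = u (single m c) * u (single m 1)"
    using single_Suc[OF m Suc.prems] hom single_in[OF m] by auto
  then show ?case using Suc by simp
qed

lemma trunc_in: "\<xi> \<in> G \<Longrightarrow> trunc m \<xi> \<in> G" by (auto simp: grp_def trunc_def)
lemma trunc_0: "trunc 0 \<xi> = zer" by (auto simp: trunc_def zer_def)
lemma trunc_r: "\<xi> \<in> G \<Longrightarrow> trunc r \<xi> = \<xi>" by (rule ext) (auto simp: trunc_def grp_def)
lemma trunc_Suc: "\<xi> \<in> G \<Longrightarrow> m < r \<Longrightarrow> trunc (Suc m) \<xi> = add (trunc m \<xi>) (single m (\<xi> m))"
  by (rule ext) (auto simp: trunc_def single_def gadd_def grp_def)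

lemma hom_agree:
  assumes hu: "\<forall>x\<in>G. \<forall>y\<in>G. u (add x y) = u x * u y" and u0: "u zer = (1::complex)"
    and hw: "\<forall>x\<in>G. \<forall>y\<in>G. w (add x y) = w x * w y" and w0: "w zer = 1"
    and ag: "\<forall>m<r. 1 < a m \<longrightarrow> u (single m 1) = w (single m 1)"
    and \<xi>: "\<xi> \<in> G"
  shows "u \<xi> = w \<xi>"
proof -
  have s: "u (single m c) = w (single m c)" if m: "m < r" and c: "c < a m" for m c
  proof (cases c)
    case 0 then show ?thesis by (simp add: single_zero u0 w0)
  next
    case (Suc c')
    then have "1 < a m" using c by simp
    then show ?thesis using single_pow[OF hu u0 m c] single_pow[OF hw w0 m c] ag m by simp
  qed
  have "m \<le> r \<Longrightarrow> u (trunc m \<xi>) = w (trunc m \<xi>)" for m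
  proof (induction m)
    case 0 then show ?case by (simp add: trunc_0 u0 w0)
  next
    case (Suc m)
    then have m: "m < r" by simp
    have xm: "\<xi> m < a m" using \<xi> m by (auto simp: grp_def)
    show ?case unfolding trunc_Suc[OF \<xi> m]
      using hu hw trunc_in[OF \<xi>] single_in[OF m xm] Suc s[OF m xm] by simp
  qed
  from this[of r] show ?thesis using trunc_r[OF \<xi>] by simp
qed

lemma char_class:
  assumes hu: "\<forall>x\<in>G. \<forall>y\<in>G. u (add x y) = u x * u y" and u0: "u zer = (1::complex)"
  shows "\<exists>y\<in>G. \<forall>\<xi>\<in>G. u \<xi> = chr r a \<xi> y"
proof -
  have root: "\<exists>j<a m. u (single m 1) = exp (2 * of_real pi * \<i> * of_nat j / of_nat (a m))"
    if m: "m < r" and am: "1 < a m" for m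
  proof -
    have e: "add (single m (a m - 1)) (single m 1) = zer"
      using am by (intro ext) (auto simp: single_def gadd_def zer_def)
    have "1 = u (add (single m (a m - 1)) (single m 1))" using e u0 by simp
    also have "\<dots> = u (single m 1) ^ (a m - 1) * u (single m 1)"
      using hu single_in[OF m] single_pow[OF hu u0 m, of "a m - 1"] am by simp
    also have "\<dots> = u (single m 1) ^ a m"
      using am by (metis Suc_diff_1 less_trans zero_less_one power_Suc2)
    finally have "u (single m 1) \<in> {z. z ^ a m = 1}" by simp
    then show ?thesis using complex_roots_unity[of "a m"] am by auto
  qed
  define y where "y = (\<lambda>m. if m < r \<and> 1 < a m then
      (SOME j. j < a m \<and> u (single m 1) = exp (2 * of_real pi * \<i> * of_nat j / of_nat (a m))) else 0)"
  have yp: "y m < a m \<and> u (single m 1) = exp (2 * of_real pi * \<i> * of_nat (y m) / of_nat (a m))"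
    if "m < r" "1 < a m" for m
    using someI_ex[OF root[OF that]] that unfolding y_def by simp
  have yG: "y \<in> G"
    unfolding grp_def
  proof (intro CollectI conjI allI impI)
    fix k assume k: "k < r"
    show "y k < a k"
    proof (cases "1 < a k")
      case True then show ?thesis using yp k by blast
    next
      case False then show ?thesis using apos k by (simp add: y_def)
    qed
  next
    fix k assume "r \<le> k" then show "y k = 0" by (simp add: y_def)
  qed
  have ag: "\<forall>m<r. 1 < a m \<longrightarrow> u (single m 1) = chr r a (single m 1) y"
    by (metis chr_single yp)
  have "\<forall>\<xi>\<in>G. u \<xi> = chr r a \<xi> y"
  proof
    fix \<xi> assume \<xi>: "\<xi> \<in> G"
    show "u \<xi> = chr r a \<xi> y"
      by (rule hom_agree[OF hu u0 _ _ ag \<xi>]) (auto simp: chr_add1 chr_zer1)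
  qed
  then show ?thesis using yG by blast
qed

end


definition PP :: "nat \<Rightarrow> (nat \<Rightarrow> nat) \<Rightarrow> ((nat \<Rightarrow> nat) \<Rightarrow> complex) \<Rightarrow> (nat \<Rightarrow> nat) \<Rightarrow> complex" where
  "PP r a f \<xi> = (\<Sum>y\<in>grp r a. f y * chr r a \<xi> y)"

context gctx begin

lemma P_neg: "\<xi> \<in> G \<Longrightarrow> PP r a f \<xi> = dft r a f (neg \<xi>)"
  unfolding PP_def dft_def by (intro sum.cong refl) (metis chr_neg chr_sym complex_cnj_cnj)

lemma M1: "autocorr r a f [] = dft r a f zer"
  by (simp add: autocorr_def dft_def chr_zer1)

lemma bisp: "(\<Sum>x1\<in>G. \<Sum>x2\<in>G. autocorr r a f [x1, x2] * cnj (chr r a \<xi>1 x1) * cnj (chr r a \<xi>2 x2))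
   = dft r a f \<xi>1 * dft r a f \<xi>2 * PP r a f (add \<xi>1 \<xi>2)"
proof -
  define T where "T x1 x2 y = f y * (f (add x1 y) * cnj (chr r a \<xi>1 x1)) * (f (add x2 y) * cnj (chr r a \<xi>2 x2))" for x1 x2 y
  have "(\<Sum>x1\<in>G. \<Sum>x2\<in>G. autocorr r a f [x1, x2] * cnj (chr r a \<xi>1 x1) * cnj (chr r a \<xi>2 x2))
      = (\<Sum>x1\<in>G. \<Sum>x2\<in>G. \<Sum>y\<in>G. T x1 x2 y)"
    unfolding autocorr_def T_def
    by (intro sum.cong refl) (simp add: sum_distrib_left sum_distrib_right add_comm mult_ac)
  also have "\<dots> = (\<Sum>x1\<in>G. \<Sum>y\<in>G. \<Sum>x2\<in>G. T x1 x2 y)"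
    by (rule sum.cong[OF refl], rule sum.swap)
  also have "\<dots> = (\<Sum>y\<in>G. \<Sum>x1\<in>G. \<Sum>x2\<in>G. T x1 x2 y)"
    by (rule sum.swap)
  also have "\<dots> = (\<Sum>y\<in>G. f y * dft r a (\<lambda>x. f (add x y)) \<xi>1 * dft r a (\<lambda>x. f (add x y)) \<xi>2)"
    unfolding T_def dft_def by (simp add: sum_distrib_left sum_distrib_right mult_ac)
  also have "\<dots> = (\<Sum>y\<in>G. f y * (chr r a \<xi>1 y * dft r a f \<xi>1) * (chr r a \<xi>2 y * dft r a f \<xi>2))"
    by (intro sum.cong refl) (simp add: shift)
  also have "\<dots> = dft r a f \<xi>1 * dft r a f \<xi>2 * PP r a f (add \<xi>1 \<xi>2)"
    unfolding PP_def by (simp add: chr_add1 sum_distrib_left mult_ac)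
  finally show ?thesis .
qed

lemma key: assumes y: "y \<in> G" and e: "\<forall>\<xi>\<in>G. dft r a g \<xi> = chr r a \<xi> y * dft r a f \<xi>"
  shows "\<forall>x\<in>G. g x = f (add x y)"
proof -
  have "\<forall>\<xi>\<in>G. dft r a (\<lambda>x. g x - f (add x y)) \<xi> = 0"
  proof
    fix \<xi> assume "\<xi> \<in> G"
    have "dft r a (\<lambda>x. g x - f (add x y)) \<xi> = dft r a g \<xi> - dft r a (\<lambda>x. f (add x y)) \<xi>"
      unfolding dft_def by (simp add: sum_subtractf left_diff_distrib)
    then show "dft r a (\<lambda>x. g x - f (add x y)) \<xi> = 0" using e \<open>\<xi> \<in> G\<close> shift[OF y] by simp
  qed
  then show ?thesis using uniq[of "\<lambda>x. g x - f (add x y)"] by simp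
qed

lemma main_nz:
  assumes nzf: "\<forall>x\<in>G. dft r a f x \<noteq> 0"
    and m1: "dft r a f zer = dft r a g zer"
    and B: "\<forall>\<xi>1\<in>G. \<forall>\<xi>2\<in>G. dft r a f \<xi>1 * dft r a f \<xi>2 * PP r a f (add \<xi>1 \<xi>2) =
                             dft r a g \<xi>1 * dft r a g \<xi>2 * PP r a g (add \<xi>1 \<xi>2)"
  shows "\<exists>y\<in>G. \<forall>\<xi>\<in>G. dft r a g \<xi> = chr r a \<xi> y * dft r a f \<xi>"
proof -
  define F where "F = dft r a f"
  define H where "H = dft r a g"
  define Pf where "Pf = PP r a f"
  define Pg where "Pg = PP r a g"
  have Fnz: "\<And>x. x \<in> G \<Longrightarrow> F x \<noteq> 0" using nzf F_def by auto
  have Pfnz: "\<And>x. x \<in> G \<Longrightarrow> Pf x \<noteq> 0" using Fnz P_neg neg_in unfolding Pf_def F_def by metis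
  have F0: "F zer \<noteq> 0" "H zer = F zer" using Fnz zer_in m1 F_def H_def by auto
  have B': "\<And>p q. p \<in> G \<Longrightarrow> q \<in> G \<Longrightarrow> F p * F q * Pf (add p q) = H p * H q * Pg (add p q)"
    using B F_def H_def Pf_def Pg_def by auto
  have two: "F p * Pf p = H p * Pg p" if p: "p \<in> G" for p
  proof -
    have "F p * F zer * Pf p = H p * H zer * Pg p" using B'[OF p zer_in] add_zer[OF p] by simp
    then show ?thesis using F0 by (simp add: mult_ac)
  qed
  have Hnz: "H p \<noteq> 0" "Pg p \<noteq> 0" if p: "p \<in> G" for p
    using two[OF p] Fnz[OF p] Pfnz[OF p] by auto
  define u where "u \<xi> = H \<xi> / F \<xi>" for \<xi>
  have u0: "u zer = 1" using F0 u_def by simp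
  have hom: "\<forall>p\<in>G. \<forall>q\<in>G. u (add p q) = u p * u q"
  proof (intro ballI)
    fix p q assume p: "p \<in> G" and q: "q \<in> G"
    have c: "add p q \<in> G" by (rule add_in)
    have e1: "F (add p q) * Pf (add p q) = H (add p q) * Pg (add p q)" using two[OF c] .
    have e2: "F p * F q * Pf (add p q) = H p * H q * Pg (add p q)" using B'[OF p q] .
    have u1: "H (add p q) / F (add p q) = Pf (add p q) / Pg (add p q)"
      using e1 Fnz[OF c] Hnz[OF c] by (simp add: frac_eq_eq mult.commute)
    have u2: "H p / F p * (H q / F q) = Pf (add p q) / Pg (add p q)"
      using e2 Fnz[OF p] Fnz[OF q] Hnz[OF c] by (simp add: frac_eq_eq mult_ac)
    show "u (add p q) = u p * u q" unfolding u_def u1 u2 ..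
  qed
  obtain y where y: "y \<in> G" and uy: "\<forall>\<xi>\<in>G. u \<xi> = chr r a \<xi> y"
    using char_class[OF hom u0] by blast
  have "\<forall>\<xi>\<in>G. H \<xi> = chr r a \<xi> y * F \<xi>"
    using uy Fnz unfolding u_def by (auto simp: field_simps)
  then show ?thesis using y H_def F_def by auto
qed

end

theorem theorem1:
  fixes r :: nat and a :: "nat \<Rightarrow> nat" and f g :: "(nat \<Rightarrow> nat) \<Rightarrow> complex"
  assumes apos: "\<forall>k<r. a k > 0"
    and nz: "(\<forall>x\<in>grp r a. dft r a f x \<noteq> 0) \<or> (\<forall>x\<in>grp r a. dft r a g x \<noteq> 0)"
    and M: "\<forall>n\<in>{1,2,3}. \<forall>xs. length xs = n - 1 \<and> set xs \<subseteq> grp r a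
              \<longrightarrow> autocorr r a f xs = autocorr r a g xs"
  shows "\<exists>y\<in>grp r a. \<forall>x\<in>grp r a. g x = f (gadd r a x y)"
proof -
  interpret gctx r a using apos by unfold_locales
  have a1: "autocorr r a f [] = autocorr r a g []" using M by auto
  have a3: "autocorr r a f [x1, x2] = autocorr r a g [x1, x2]" if "x1 \<in> grp r a" "x2 \<in> grp r a" for x1 x2
    using M that by (auto dest!: bspec[of _ _ 3])
  have m1: "dft r a f zer = dft r a g zer" using a1 M1 by metis
  have B: "\<forall>\<xi>1\<in>grp r a. \<forall>\<xi>2\<in>grp r a. dft r a f \<xi>1 * dft r a f \<xi>2 * PP r a f (gadd r a \<xi>1 \<xi>2) =
                             dft r a g \<xi>1 * dft r a g \<xi>2 * PP r a g (gadd r a \<xi>1 \<xi>2)"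
  proof (intro ballI)
    fix \<xi>1 \<xi>2
    show "dft r a f \<xi>1 * dft r a f \<xi>2 * PP r a f (gadd r a \<xi>1 \<xi>2) =
          dft r a g \<xi>1 * dft r a g \<xi>2 * PP r a g (gadd r a \<xi>1 \<xi>2)"
      unfolding bisp[symmetric] by (intro sum.cong refl) (simp add: a3)
  qed
  from nz show ?thesis
  proof
    assume "\<forall>x\<in>grp r a. dft r a f x \<noteq> 0"
    from main_nz[OF this m1 B] obtain y where "y \<in> grp r a"
      "\<forall>\<xi>\<in>grp r a. dft r a g \<xi> = chr r a \<xi> y * dft r a f \<xi>" by blast
    then show ?thesis using key by blast
  next
    assume "\<forall>x\<in>grp r a. dft r a g x \<noteq> 0"
    from main_nz[OF this m1[symmetric]] B obtain y where y: "y \<in> grp r a"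
      and e: "\<forall>\<xi>\<in>grp r a. dft r a f \<xi> = chr r a \<xi> y * dft r a g \<xi>" by metis
    have "\<forall>\<xi>\<in>grp r a. dft r a g \<xi> = chr r a \<xi> (gneg r a y) * dft r a f \<xi>"
    proof
      fix \<xi> assume "\<xi> \<in> grp r a"
      then have "chr r a \<xi> (gneg r a y) * dft r a f \<xi> = (cnj (chr r a \<xi> y) * chr r a \<xi> y) * dft r a g \<xi>"
        using e y by (simp add: chr_neg mult.assoc)
      then show "dft r a g \<xi> = chr r a \<xi> (gneg r a y) * dft r a f \<xi>" by (simp add: cnj_chr_mult)
    qed
    then show ?thesis using key neg_in by blast
  qed
qed


end
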